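(* Let $m_c\in H$ be such that for every $\lambda\in\Lambda$ the local component has the form $m_\lambda=Y\,f_\lambda$ with $f_\lambda$ a power series in $s_\lambda$ (i.e. $G_0^\lambda=0$ for all $\lambda$). Write $f_\infty=\sum_{\ell\ge0}a_\ell s_\infty^\ell$ (with $a_0=0$). If $a_\ell=0$ for $\ell=0,1,\dots,2g+1$, then $m_c=0$.
   Context: Standing setup. Let $k$ be a finite field of odd characteristic $p$, $W(k)$ its ring of Witt vectors, $K$ the fraction field of $W(k)$, $|\cdot|$ the $p$-adic absolute value. Let $g\ge1$ and let $\lambda_1,\dots,\lambda_{2g+1}\in W(k)$ have pairwise distinct reductions modulo $p$. Put $Q(t)=\prod_{i=1}^{2g+1}(t-\lambda_i)$ and $h(t)=\frac{Q'(t)}{2Q(t)}$. Let $\Lambda=\{\lambda_1,\dots,\lambda_{2g+1},\infty\}$, $\Lambda_0=\Lambda\setminus\{\infty\}$. The local parameter at $\lambda\in\Lambda_0$ is $s_\lambda=t-\lambda$, and at $\infty$ it is $s_\infty=t^{-1}$. Let $B_K^\dagger$ be the ring of series $\sum_{\underline\ell\ge0}a_{\underline\ell}\,t^{\ell_0}\prod_{i}(t-\lambda_i)^{-\ell_i}$ ($a_{\underline\ell}\in K$) for which there is $\eta>1$ with $|a_{\underline\ell}|\eta^{\max_i\ell_i}\to0$; $\phi_\lambda(f)$ is the Laurent expansion of $f\in B_K^\dagger$ in $s_\lambda$. The principal part is $\Pr_\lambda(\sum a_\ell s_\lambda^\ell)=\sum_{\ell<0}a_\ell s_\lambda^\ell$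 for $\lambda\in\Lambda_0$ and $\Pr_\infty(\sum a_\ell s_\infty^\ell)=\sum_{\ell\le0}a_\ell s_\infty^\ell$; its expansion at another point $\mu$ is denoted $\phi_\mu(\cdot)$. For $\lambda\in\Lambda_0$, $\tilde R_{\lambda,c}$ is the space of $\sum_{\ell\ge0}a_\ell s_\lambda^\ell$ with $|a_\ell|\eta^\ell\to0$ for all $\eta<1$, and $R_{\infty,c}$ the analogous space of $\sum_{\ell\ge1}a_\ell s_\infty^\ell$. $B_c=\prod_{\lambda\in\Lambda_0}\tilde R_{\lambda,c}\times R_{\infty,c}$ is a $B_K^\dagger$-module via $(f\cdot G)^\mu=\phi_\mu(f)G^\mu-\sum_{\lambda\in\Lambda}\phi_\mu\big(\Pr_\lambda(\phi_\lambda(f)G^\lambda)\big)$. Let $A_K^\dagger=B_K^\dagger\oplus B_K^\dagger Y$ with $Y^2=Q(t)$, $\nabla_{GM}(1)=0$, $\nabla_{GM}(Y)=hY$; $M_c=A_K^\dagger\otimes_{B_K^\dagger}B_c$ with elements $m_c=1\otimes G_0+Y\otimes G_1$ ($G_0,G_1\in B_c$) and $\nabla_c(m_c)=1\otimes\partial_tG_0+Y\otimes(\partial_tG_1+h\cdot G_1)$, $\partial_t$ acting componentwise (as $-s_\infty^2\,d/ds_\infty$ on series in $s_\infty$). $H=\ker\nabla_c$ (the space $H^1_{MW,c}(V,\pi_*A_K^\dagger)$). Local components: $m_\lambda=G_0^\lambda+YG_1^\lambda$. *)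

theory Defs
  imports "HOL-Computational_Algebra.Computational_Algebra"
begin

text \<open>Points of Lambda: Some a is the finite point t = a, None is infinity.\<close>

text \<open>Abstract model of the p-adic absolute value on K (odd residue characteristic).\<close>
definition padic_abs :: "('a::field_char_0 \<Rightarrow> real) \<Rightarrow> bool" where
  "padic_abs absv \<longleftrightarrow>
     (\<forall>x. absv x \<ge> 0 \<and> (absv x = 0 \<longleftrightarrow> x = 0)) \<and>
     (\<forall>x y. absv (x * y) = absv x * absv y) \<and>
     (\<forall>x y. absv (x + y) \<le> max (absv x) (absv y)) \<and>
     (\<exists>p::nat. prime p \<and> odd p \<and> absv (of_nat p) < 1)"

definition Qpoly :: "nat \<Rightarrow> (nat \<Rightarrow> 'a::field) \<Rightarrow> 'a poly" where
  "Qpoly g lam = (\<Prod>i=1..2*g+1. [:- lam i, 1:])"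

definition Lam :: "nat \<Rightarrow> (nat \<Rightarrow> 'a) \<Rightarrow> 'a option set" where
  "Lam g lam = Some ` lam ` {1..2*g+1} \<union> {None}"

text \<open>Laurent expansion of the coordinate t at a point.\<close>
definition t_at :: "'a::field option \<Rightarrow> 'a fls" where
  "t_at mu = (case mu of Some a \<Rightarrow> fls_X + fls_const a | None \<Rightarrow> fls_X_inv)"

text \<open>Laurent expansion at mu of the local parameter s_lambda.\<close>
definition s_at :: "'a::field option \<Rightarrow> 'a option \<Rightarrow> 'a fls" where
  "s_at lam mu = (case lam of Some a \<Rightarrow> t_at mu - fls_const a | None \<Rightarrow> inverse (t_at mu))"

text \<open>Laurent expansion phi_mu of a rational function P/R (poles in Lambda).\<close>
definition phi :: "'a::field option \<Rightarrow> 'a poly \<times> 'a poly \<Rightarrow> 'a fls" where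
  "phi mu f = poly (map_poly fls_const (fst f)) (t_at mu) / poly (map_poly fls_const (snd f)) (t_at mu)"

text \<open>Expansion at mu of the principal part Pr_lambda(F) of a Laurent series F in s_lambda.\<close>
definition Pr_at :: "'a::field option \<Rightarrow> 'a fls \<Rightarrow> 'a option \<Rightarrow> 'a fls" where
  "Pr_at lam F mu =
     (\<Sum>l\<in>{fls_subdegree F .. (if lam = None then 0 else -1)}. fls_const (fls_nth F l) * power_int (s_at lam mu) l)"

definition in_Bc :: "('a::field \<Rightarrow> real) \<Rightarrow> 'a option set \<Rightarrow> ('a option \<Rightarrow> 'a fps) \<Rightarrow> bool" where
  "in_Bc absv L G \<longleftrightarrow>
     (\<forall>mu\<in>L. \<forall>\<eta>::real. 0 < \<eta> \<and> \<eta> < 1 \<longrightarrow> (\<lambda>l. absv (G mu $ l) * \<eta> ^ l) \<longlonglongrightarrow> 0) \<and>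
     (None \<in> L \<longrightarrow> G None $ 0 = 0)"

text \<open>The B_K^dagger-module action on B_c (for rational f), as a Laurent series at mu.\<close>
definition act :: "'a::field option set \<Rightarrow> 'a poly \<times> 'a poly \<Rightarrow> ('a option \<Rightarrow> 'a fps) \<Rightarrow> 'a option \<Rightarrow> 'a fls" where
  "act L f G mu = phi mu f * fps_to_fls (G mu)
     - (\<Sum>lam\<in>L. Pr_at lam (phi lam f * fps_to_fls (G lam)) mu)"

text \<open>Componentwise d/dt: d/ds at finite points, -s^2 d/ds at infinity.\<close>
definition dt :: "('a::field option \<Rightarrow> 'a fps) \<Rightarrow> 'a option \<Rightarrow> 'a fls" where
  "dt G mu = (case mu of Some _ \<Rightarrow> fps_to_fls (fps_deriv (G mu))
                       | None \<Rightarrow> - (fls_X ^ 2) * fps_to_fls (fps_deriv (G mu)))"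

definition h_rat :: "nat \<Rightarrow> (nat \<Rightarrow> 'a::field) \<Rightarrow> 'a poly \<times> 'a poly" where
  "h_rat g lam = (pderiv (Qpoly g lam), smult 2 (Qpoly g lam))"

text \<open>m_c = 1 (x) G0 + Y (x) G1 lies in H = ker nabla_c.\<close>
definition in_H :: "('a::field_char_0 \<Rightarrow> real) \<Rightarrow> nat \<Rightarrow> (nat \<Rightarrow> 'a) \<Rightarrow> ('a option \<Rightarrow> 'a fps) \<Rightarrow> ('a option \<Rightarrow> 'a fps) \<Rightarrow> bool" where
  "in_H absv g lam G0 G1 \<longleftrightarrow>
     in_Bc absv (Lam g lam) G0 \<and> in_Bc absv (Lam g lam) G1 \<and>
     (\<forall>mu\<in>Lam g lam. dt G0 mu = 0 \<and> dt G1 mu + act (Lam g lam) (h_rat g lam) G1 mu = 0)"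

end

theory Submission
  imports Defs
begin

lemma map_poly_fls_const_mult:
  "map_poly fls_const (p * q) = map_poly fls_const p * map_poly (fls_const::'a::field \<Rightarrow> 'a fls) q"
proof (rule poly_eqI)
  fix n
  have sum: "fls_const (\<Sum>i\<in>A. f i) = (\<Sum>i\<in>A. fls_const (f i))" for A and f :: "nat \<Rightarrow> 'a"
    by (induction A rule: infinite_finite_induct) (auto intro!: fls_eqI simp: fls_nth_sum)
  show "coeff (map_poly fls_const (p * q)) n = coeff (map_poly fls_const p * map_poly fls_const q) n"
    by (simp add: coeff_mult coeff_map_poly sum)
qed

lemma map_poly_fls_const_prod:
  "map_poly fls_const (\<Prod>i\<in>A. p i) = (\<Prod>i\<in>A. map_poly (fls_const::'a::field \<Rightarrow> 'a fls) (p i))"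
  by (induction A rule: infinite_finite_induct) (auto simp: map_poly_fls_const_mult)

lemma map_poly_fls_const_pderiv:
  "map_poly fls_const (pderiv p) = pderiv (map_poly (fls_const::'a::field \<Rightarrow> 'a fls) p)"
proof (rule poly_eqI)
  fix n
  have "fls_const (of_nat k * x) = of_nat k * fls_const (x::'a)" for k x
    by (intro fls_eqI) (simp add: fls_of_nat_nth)
  from this[of "Suc n"] show "coeff (map_poly fls_const (pderiv p)) n = coeff (pderiv (map_poly fls_const p)) n"
    by (simp add: coeff_pderiv coeff_map_poly del: of_nat_Suc)
qed

lemma partial_frac:
  fixes T :: "'b::field"
  assumes "finite A" "\<forall>i\<in>A. T \<noteq> a i"
  shows "poly (pderiv (\<Prod>i\<in>A. [:- a i, 1:])) T / poly (\<Prod>i\<in>A. [:- a i, 1:]) T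
         = (\<Sum>i\<in>A. inverse (T - a i))"
proof -
  have nz: "(\<Prod>k\<in>B. T - a k) \<noteq> 0" if "B \<subseteq> A" for B
    using assms that by (subst prod_zero_iff) (auto intro: finite_subset)
  have "poly (pderiv (\<Prod>i\<in>A. [:- a i, 1:])) T = (\<Sum>i\<in>A. \<Prod>k\<in>A-{i}. T - a k)"
    by (simp add: pderiv_prod poly_sum poly_prod pderiv_pCons)
  moreover have "poly (\<Prod>i\<in>A. [:- a i, 1:]) T = (\<Prod>k\<in>A. T - a k)"
    by (simp add: poly_prod)
  moreover have "(\<Prod>k\<in>A-{i}. T - a k) / (\<Prod>k\<in>A. T - a k) = inverse (T - a i)" if "i \<in> A" for i
  proof -
    have "(\<Prod>k\<in>A. T - a k) = (T - a i) * (\<Prod>k\<in>A-{i}. T - a k)"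
      using that assms(1) by (simp add: prod.remove)
    then show ?thesis using nz[of "A-{i}"] assms that by (simp add: field_simps)
  qed
  ultimately show ?thesis by (simp add: sum_divide_distrib)
qed

lemma map_poly_fls_const_smult2:
  "map_poly fls_const (smult 2 p) = smult 2 (map_poly (fls_const::'a::field \<Rightarrow> 'a fls) p)"
proof -
  have "fls_const (2*x) = 2 * fls_const (x::'a)" for x by (intro fls_eqI) simp
  then show ?thesis by (intro poly_eqI) (simp add: coeff_map_poly)
qed

lemma map_poly_fls_const_lin:
  "map_poly fls_const [:- a, 1:] = [:- fls_const (a::'a::field), 1:]"
  by (rule poly_eqI) (simp add: coeff_map_poly coeff_pCons split: nat.split)

lemma fls_half: "fls_const (1/2::'a::field_char_0) = inverse 2"
proof -
  have "(2::'a fls) * fls_const (1/2) = 1"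
    by (metis fls_const_1 fls_const_mult_const fls_const_numeral field_sum_of_halves
        mult_2 times_divide_eq_right nonzero_mult_div_cancel_left zero_neq_numeral)
  then show ?thesis by (metis inverse_unique)
qed

lemma div2_half: "x / (2 * y) = fls_const (1/2::'a::field_char_0) * (x / y)"
  by (simp add: fls_half field_simps)

lemma phi_h:
  fixes lam :: "nat \<Rightarrow> 'a::field_char_0"
  assumes "\<forall>i\<in>{1..2*g+1}. t_at mu \<noteq> fls_const (lam i)"
  shows "phi mu (h_rat g lam) =
     (\<Sum>i\<in>{1..2*g+1}. fls_const (1/2) * inverse (t_at mu - fls_const (lam i)))"
proof -
  let ?A = "{1..2*g+1}"
  have "phi mu (h_rat g lam) = poly (pderiv (\<Prod>i\<in>?A. [:- fls_const (lam i), 1:])) (t_at mu) /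
      (2 * poly (\<Prod>i\<in>?A. [:- fls_const (lam i), 1:]) (t_at mu))"
    unfolding phi_def h_rat_def Qpoly_def
    by (simp only: fst_conv snd_conv map_poly_fls_const_pderiv map_poly_fls_const_prod
       map_poly_fls_const_smult2 map_poly_fls_const_lin poly_smult)
  also have "\<dots> = fls_const (1/2) * (poly (pderiv (\<Prod>i\<in>?A. [:- fls_const (lam i), 1:])) (t_at mu) /
      poly (\<Prod>i\<in>?A. [:- fls_const (lam i), 1:]) (t_at mu))"
    by (rule div2_half)
  also have "\<dots> = fls_const (1/2) * (\<Sum>i\<in>?A. inverse (t_at mu - fls_const (lam i)))"
    using assms by (subst partial_frac) auto
  finally show ?thesis by (simp only: sum_distrib_left)
qed

definition geo :: "'a::field \<Rightarrow> 'a fps" where "geo c = Abs_fps (\<lambda>m. c ^ m)"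

lemma geo_mult: "(1 - fps_const c * fps_X) * geo c = 1"
proof (rule fps_ext)
  fix n show "((1 - fps_const c * fps_X) * geo c) $ n = (1::'a fps) $ n"
    by (cases n) (simp_all add: geo_def algebra_simps mult.assoc)
qed

lemma xinv_x: "fls_X_inv * fls_X = (1::'a::field fls)" "fls_X * fls_X_inv = (1::'a::field fls)"
  by (simp_all add: fls_X_inv_times_conv_shift)

lemma inv_at_inf: "inverse (fls_X_inv - fls_const (c::'a::field)) = fls_X * fps_to_fls (geo c)"
proof (rule inverse_unique)
  have "(fls_X_inv - fls_const c) * (fls_X * fps_to_fls (geo c))
      = (1 - fls_const c * fls_X) * fps_to_fls (geo c)"
  proof -
    have "(fls_X_inv - fls_const c) * (fls_X * fps_to_fls (geo c))
      = (fls_X_inv * fls_X) * fps_to_fls (geo c) - fls_const c * fls_X * fps_to_fls (geo c)"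
      by (simp only: algebra_simps)
    then show ?thesis by (simp only: xinv_x algebra_simps)
  qed
  also have "\<dots> = fps_to_fls ((1 - fps_const c * fps_X) * geo c)"
    by (simp add: fls_times_fps_to_fls)
  also have "\<dots> = 1" by (simp add: geo_mult)
  finally show "(fls_X_inv - fls_const c) * (fls_X * fps_to_fls (geo c)) = 1" .
qed

lemma inv_at_fin: "d \<noteq> 0 \<Longrightarrow> inverse (fls_X + fls_const (d::'a::field)) = fps_to_fls (inverse (fps_X + fps_const d))"
proof -
  assume d: "d \<noteq> 0"
  have e: "fls_X + fls_const d = fps_to_fls (fps_X + fps_const d)" by simp
  have sd: "subdegree (fps_X + fps_const d) = 0" using d by (intro subdegree_eq_0) simp
  show ?thesis by (simp only: e fls_inverse_fps_to_fls[OF sd])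
qed

lemma fps_to_fls_sum: "fps_to_fls (\<Sum>i\<in>A. f i) = (\<Sum>i\<in>A. fps_to_fls (f i :: 'a::field fps))"
  by (induction A rule: infinite_finite_induct) auto

lemma Pr_None_zero: "\<forall>l\<le>0. fls_nth F l = 0 \<Longrightarrow> Pr_at None F mu = 0"
  unfolding Pr_at_def by (intro sum.neutral) auto

lemma Pr_Some:
  fixes F :: "'a::field fls"
  assumes "\<forall>l< -1. fls_nth F l = 0"
  shows "Pr_at (Some a) F mu = fls_const (fls_nth F (-1)) * inverse (s_at (Some a) mu)"
proof -
  let ?S = "{fls_subdegree F .. -1}"
  have "Pr_at (Some a) F mu = (\<Sum>l\<in>?S. if l = -1 then fls_const (fls_nth F (-1)) * inverse (s_at (Some a) mu) else 0)"
    unfolding Pr_at_def using assms by (intro sum.cong) auto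
  also have "\<dots> = (if -1 \<in> ?S then fls_const (fls_nth F (-1)) * inverse (s_at (Some a) mu) else 0)"
    by (simp add: sum.delta)
  also have "\<dots> = fls_const (fls_nth F (-1)) * inverse (s_at (Some a) mu)"
  proof (cases "-1 \<in> ?S")
    case False
    then have "-1 < fls_subdegree F" by auto
    then have "fls_nth F (-1) = 0" by (simp add: fls_eq0_below_subdegree)
    then show ?thesis using False by simp
  qed simp
  finally show ?thesis .
qed

lemma sum_Lam:
  assumes "inj_on lam {1..2*g+1}"
  shows "(\<Sum>x\<in>Lam g lam. f x) = (\<Sum>i\<in>{1..2*g+1}. f (Some (lam i))) + f None"
proof -
  have "(\<Sum>x\<in>Lam g lam. f x) = (\<Sum>x\<in>(Some \<circ> lam) ` {1..2*g+1}. f x) + f None"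
    unfolding Lam_def by (subst sum.union_disjoint) (auto simp: image_comp)
  also have "(\<Sum>x\<in>(Some \<circ> lam) ` {1..2*g+1}. f x) = (\<Sum>i\<in>{1..2*g+1}. f (Some (lam i)))"
    using assms by (subst sum.reindex) (auto simp: inj_on_def)
  finally show ?thesis .
qed

lemma mixed_nth:
  fixes G V :: "'a::field fps"
  shows "fls_nth ((fls_const k * fls_X_inv + fps_to_fls V) * fps_to_fls G) n
      = k * fls_nth (fps_to_fls G) (n+1) + fls_nth (fps_to_fls (V*G)) n"
proof -
  have "(fls_const k * fls_X_inv + fps_to_fls V) * fps_to_fls G
      = fls_const k * (fls_X_inv * fps_to_fls G) + fps_to_fls (V*G)"
    by (simp add: algebra_simps fls_times_fps_to_fls)
  then show ?thesis by (simp add: fls_X_inv_times_conv_shift)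
qed

lemma vandermonde:
  fixes a c :: "nat \<Rightarrow> 'a::field"
  assumes fin: "finite I" and inj: "inj_on a I"
    and mom: "\<forall>n<card I. (\<Sum>i\<in>I. c i * a i ^ n) = 0"
    and j: "j \<in> I"
  shows "c j = 0"
proof -
  define p where "p = (\<Prod>k\<in>I-{j}. [:- a k, 1:])"
  have "degree p \<le> (\<Sum>k\<in>I-{j}. degree [:- a k, 1:])"
    using degree_prod_sum_le[of "I-{j}" "\<lambda>k. [:- a k, 1:]"] fin by (simp add: p_def o_def)
  also have "\<dots> = card (I - {j})" by simp
  also have "\<dots> < card I" using fin j by (meson card_Diff1_less)
  finally have dp: "degree p < card I" .
  have "(\<Sum>i\<in>I. c i * poly p (a i)) = (\<Sum>i\<in>I. \<Sum>n\<le>degree p. c i * (coeff p n * a i ^ n))"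
    by (simp add: poly_altdef sum_distrib_left)
  also have "\<dots> = (\<Sum>n\<le>degree p. coeff p n * (\<Sum>i\<in>I. c i * a i ^ n))"
    by (subst sum.swap) (simp add: sum_distrib_left algebra_simps)
  also have "\<dots> = 0" using mom dp by (intro sum.neutral) auto
  finally have s0: "(\<Sum>i\<in>I. c i * poly p (a i)) = 0" .
  have "(\<Sum>i\<in>I. c i * poly p (a i)) = c j * poly p (a j)"
  proof -
    have "(\<Sum>i\<in>I-{j}. c i * poly p (a i)) = 0"
    proof (intro sum.neutral ballI)
      fix i assume i: "i \<in> I - {j}"
      have "poly p (a i) = (\<Prod>k\<in>I-{j}. a i - a k)" by (simp add: p_def poly_prod)
      also have "\<dots> = 0" using i fin by (intro prod_zero) auto
      finally show "c i * poly p (a i) = 0" by simp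
    qed
    then show ?thesis using fin j by (simp add: sum.remove)
  qed
  moreover have "poly p (a j) \<noteq> 0"
  proof -
    have "poly p (a j) = (\<Prod>k\<in>I-{j}. a j - a k)" by (simp add: p_def poly_prod)
    also have "\<dots> \<noteq> 0" using fin inj j by (subst prod_zero_iff) (auto simp: inj_on_def)
    finally show ?thesis .
  qed
  ultimately show ?thesis using s0 by simp
qed

definition Hinf :: "nat \<Rightarrow> (nat \<Rightarrow> 'a::field_char_0) \<Rightarrow> 'a fps" where
  "Hinf g lam = (\<Sum>i\<in>{1..2*g+1}. fps_const (1/2) * (fps_X * geo (lam i)))"

definition Vf :: "nat \<Rightarrow> (nat \<Rightarrow> 'a::field_char_0) \<Rightarrow> nat \<Rightarrow> 'a fps" where
  "Vf g lam j = (\<Sum>i\<in>{1..2*g+1}-{j}. fps_const (1/2) * inverse (fps_X + fps_const (lam j - lam i)))"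

lemma tNone_ne: "t_at None \<noteq> fls_const (c::'a::field)"
proof
  assume "t_at None = fls_const c"
  then have "fls_nth (t_at None) (-1) = fls_nth (fls_const c) (-1)" by simp
  then show False by (simp add: t_at_def)
qed

lemma Xinv_ne: "fls_X_inv \<noteq> fls_const (c::'a::field)"
  using tNone_ne[of c] by (simp add: t_at_def)

lemma tSome_ne: "t_at (Some a) \<noteq> fls_const (c::'a::field)"
proof
  assume "t_at (Some a) = fls_const c"
  then have "fls_nth (t_at (Some a)) 1 = fls_nth (fls_const c) 1" by simp
  then show False by (simp add: t_at_def)
qed

lemma phi_None: "phi None (h_rat g lam) = fps_to_fls (Hinf g lam)"
proof -
  have "phi None (h_rat g lam) = (\<Sum>i\<in>{1..2*g+1}. fls_const (1/2) * (fls_X * fps_to_fls (geo (lam i))))"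
    by (subst phi_h) (auto simp: tNone_ne Xinv_ne inv_at_inf t_at_def simp del: One_nat_def)
  also have "\<dots> = fps_to_fls (Hinf g lam)"
    unfolding Hinf_def fps_to_fls_sum by (simp add: fls_times_fps_to_fls)
  finally show ?thesis .
qed

lemma t_minus: "t_at (Some a) - fls_const b = fls_X + fls_const (a - b)"
  by (intro fls_eqI) (simp add: t_at_def)

lemma phi_Some:
  assumes inj: "inj_on lam {1..2*g+1}" and j: "j \<in> {1..2*g+1}"
  shows "phi (Some (lam j)) (h_rat g lam) = fls_const (1/2) * fls_X_inv + fps_to_fls (Vf g lam j)"
proof -
  let ?f = "\<lambda>i. fls_const (1/2::'a) * inverse (t_at (Some (lam j)) - fls_const (lam i))"
  have "phi (Some (lam j)) (h_rat g lam) = (\<Sum>i\<in>{1..2*g+1}. ?f i)"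
    by (rule phi_h) (simp add: tSome_ne)
  also have "\<dots> = ?f j + (\<Sum>i\<in>{1..2*g+1}-{j}. ?f i)"
    using j by (simp add: sum.remove del: One_nat_def)
  also have "?f j = fls_const (1/2) * fls_X_inv"
    by (simp add: t_minus fls_inverse_X)
  also have "(\<Sum>i\<in>{1..2*g+1}-{j}. ?f i) = fps_to_fls (Vf g lam j)"
    unfolding Vf_def fps_to_fls_sum
  proof (intro sum.cong refl)
    fix i assume i: "i \<in> {1..2*g+1}-{j}"
    then have "lam j - lam i \<noteq> 0" using inj j by (auto simp: inj_on_def)
    then show "?f i = fps_to_fls (fps_const (1/2) * inverse (fps_X + fps_const (lam j - lam i)))"
      by (simp add: t_minus inv_at_fin fls_times_fps_to_fls)
  qed
  finally show ?thesis .
qed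

lemma Hinf_0: "Hinf g lam $ 0 = 0"
  by (simp add: Hinf_def fps_sum_nth)

lemma Hinf_nth: "Hinf g lam $ Suc m = (\<Sum>i\<in>{1..2*g+1}. (1/2) * lam i ^ m)"
  by (simp add: Hinf_def fps_sum_nth geo_def)

lemma sumPr:
  fixes lam :: "nat \<Rightarrow> 'a::field_char_0"
  assumes inj: "inj_on lam {1..2*g+1}"
  shows "(\<Sum>x\<in>Lam g lam. Pr_at x (phi x (h_rat g lam) * fps_to_fls (G x)) mu)
     = (\<Sum>i\<in>{1..2*g+1}. fls_const (G (Some (lam i)) $ 0 / 2) * inverse (t_at mu - fls_const (lam i)))"
proof -
  have none: "Pr_at None (phi None (h_rat g lam) * fps_to_fls (G None)) mu = 0"
  proof (rule Pr_None_zero, intro allI impI)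
    fix l :: int assume "l \<le> 0"
    then show "fls_nth (phi None (h_rat g lam) * fps_to_fls (G None)) l = 0"
      unfolding phi_None fls_times_fps_to_fls[symmetric]
      by (cases "l = 0") (auto simp: fps_mult_nth Hinf_0)
  qed
  have some: "Pr_at (Some (lam i)) (phi (Some (lam i)) (h_rat g lam) * fps_to_fls (G (Some (lam i)))) mu
     = fls_const (G (Some (lam i)) $ 0 / 2) * inverse (t_at mu - fls_const (lam i))"
    if i: "i \<in> {1..2*g+1}" for i
  proof -
    let ?F = "phi (Some (lam i)) (h_rat g lam) * fps_to_fls (G (Some (lam i)))"
    have nth: "fls_nth ?F l = (1/2) * fls_nth (fps_to_fls (G (Some (lam i)))) (l+1)
         + fls_nth (fps_to_fls (Vf g lam i * G (Some (lam i)))) l" for l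
      by (simp only: phi_Some[OF inj i] mixed_nth)
    have "\<forall>l< -1. fls_nth ?F l = 0" by (simp add: nth)
    then have "Pr_at (Some (lam i)) ?F mu = fls_const (fls_nth ?F (-1)) * inverse (s_at (Some (lam i)) mu)"
      by (rule Pr_Some)
    also have "fls_nth ?F (-1) = G (Some (lam i)) $ 0 / 2" by (simp add: nth)
    finally show ?thesis by (simp add: s_at_def)
  qed
  show ?thesis
    by (simp only: sum_Lam[OF inj] none some cong: sum.cong) simp
qed

lemma inf_fps:
  fixes lam :: "nat \<Rightarrow> 'a::field_char_0"
  assumes "- (fls_X ^ 2) * fps_to_fls (fps_deriv G) + fps_to_fls (Hinf g lam) * fps_to_fls G
     - (\<Sum>i\<in>{1..2*g+1}. fls_const (c i / 2) * inverse (fls_X_inv - fls_const (lam i))) = 0"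
  shows "- (fps_X ^ 2) * fps_deriv G + Hinf g lam * G
     - (\<Sum>i\<in>{1..2*g+1}. fps_const (c i / 2) * (fps_X * geo (lam i))) = 0"
proof -
  have "fps_to_fls (- (fps_X ^ 2) * fps_deriv G + Hinf g lam * G
     - (\<Sum>i\<in>{1..2*g+1}. fps_const (c i / 2) * (fps_X * geo (lam i)))) =
     - (fls_X ^ 2) * fps_to_fls (fps_deriv G) + fps_to_fls (Hinf g lam) * fps_to_fls G
     - (\<Sum>i\<in>{1..2*g+1}. fls_const (c i / 2) * inverse (fls_X_inv - fls_const (lam i)))"
    by (simp only: fps_to_fls_minus fps_to_fls_plus fps_to_fls_uminus fls_times_fps_to_fls
        fps_to_fls_sum fps_to_fls_power fps_X_to_fls fps_const_to_fls inv_at_inf)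
  also note assms
  finally show ?thesis by (simp only: fps_to_fls_eq_0_iff)
qed

lemma moments:
  fixes lam :: "nat \<Rightarrow> 'a::field_char_0"
  assumes F: "- (fps_X ^ 2) * fps_deriv G + Hinf g lam * G
     - (\<Sum>i\<in>{1..2*g+1}. fps_const (c i / 2) * (fps_X * geo (lam i))) = 0"
    and z: "\<forall>k\<le>2*g+1. G $ k = 0"
    and n: "n \<le> 2*g"
  shows "(\<Sum>i\<in>{1..2*g+1}. c i * lam i ^ n) = 0"
proof -
  have "(- (fps_X ^ 2) * fps_deriv G + Hinf g lam * G
     - (\<Sum>i\<in>{1..2*g+1}. fps_const (c i / 2) * (fps_X * geo (lam i)))) $ Suc n = 0"
    using F by simp
  moreover have "(fps_X ^ 2 * fps_deriv G) $ Suc n = 0"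
    using z n by (simp add: fps_X_power_mult_nth)
  moreover have "(Hinf g lam * G) $ Suc n = 0"
    using z n by (simp add: fps_mult_nth)
  ultimately have "(\<Sum>i\<in>{1..2*g+1}. c i / 2 * lam i ^ n) = 0"
    by (simp add: fps_sum_nth geo_def del: One_nat_def)
  then have "(\<Sum>i\<in>{1..2*g+1}. c i * lam i ^ n) / 2 = 0"
    by (simp add: sum_divide_distrib field_simps del: One_nat_def)
  then show ?thesis by simp
qed

lemma inf_zero:
  fixes lam :: "nat \<Rightarrow> 'a::field_char_0"
  assumes F: "- (fps_X ^ 2) * fps_deriv G + Hinf g lam * G = 0"
    and z: "\<forall>k\<le>2*g+1. G $ k = 0"
  shows "G = 0"
proof (rule fps_ext)
  fix n show "G $ n = (0::'a fps) $ n"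
  proof (induction n rule: less_induct)
    case (less n)
    show ?case
    proof (cases "n \<le> 2*g+1")
      case True then show ?thesis using z by simp
    next
      case False
      then obtain m where m: "n = Suc m" by (cases n) auto
      have c: "(- (fps_X ^ 2) * fps_deriv G + Hinf g lam * G) $ Suc n = 0" using F by simp
      have d: "(fps_X ^ 2 * fps_deriv G) $ Suc n = of_nat n * G $ n"
        using m by (simp add: fps_X_power_mult_nth)
      have "(Hinf g lam * G) $ Suc n = (\<Sum>i=0..Suc n. if i = 1 then Hinf g lam $ 1 * G $ n else 0)"
        unfolding fps_mult_nth
      proof (intro sum.cong refl)
        fix i assume i: "i \<in> {0..Suc n}"
        show "Hinf g lam $ i * G $ (Suc n - i) = (if i = 1 then Hinf g lam $ 1 * G $ n else 0)"
        proof (cases "i = 0")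
          case True then show ?thesis by (simp add: Hinf_0)
        next
          case False
          then show ?thesis using less.IH[of "Suc n - i"] i False by (cases "i = 1") auto
        qed
      qed
      also have "\<dots> = Hinf g lam $ 1 * G $ n" by (simp add: sum.delta)
      also have "Hinf g lam $ 1 = of_nat (2*g+1) / 2"
        using Hinf_nth[of g lam 0] by simp
      finally have h: "(Hinf g lam * G) $ Suc n = of_nat (2*g+1) / 2 * G $ n" .
      from c d h have "(of_nat (2*g+1) / 2 - of_nat n) * G $ n = 0"
        by (simp add: algebra_simps)
      moreover have "of_nat (2*g+1) / 2 - of_nat n \<noteq> (0::'a)"
      proof
        assume "of_nat (2*g+1) / 2 - of_nat n = (0::'a)"
        then have "(of_nat (2*g+1) :: 'a) = of_nat (2*n)" by (simp add: field_simps)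
        then have "2*g+1 = 2*n" by (simp only: of_nat_eq_iff)
        then show False by presburger
      qed
      ultimately show ?thesis by simp
    qed
  qed
qed

lemma fin_zero:
  fixes G V :: "'a::field_char_0 fps"
  assumes E: "fps_to_fls (fps_deriv G) + (fls_const (1/2) * fls_X_inv + fps_to_fls V) * fps_to_fls G = 0"
  shows "G = 0"
proof -
  have "fps_to_fls (fps_X * fps_deriv G + fps_const (1/2) * G + fps_X * (V * G))
      = fls_X * (fps_to_fls (fps_deriv G) + (fls_const (1/2) * fls_X_inv + fps_to_fls V) * fps_to_fls G)"
  proof -
    have "fls_X * (fps_to_fls (fps_deriv G) + (fls_const (1/2) * fls_X_inv + fps_to_fls V) * fps_to_fls G)
       = fls_X * fps_to_fls (fps_deriv G) + fls_const (1/2) * (fls_X * fls_X_inv) * fps_to_fls G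
         + fls_X * (fps_to_fls V * fps_to_fls G)"
      by (simp add: algebra_simps)
    then show ?thesis by (simp add: xinv_x fls_times_fps_to_fls)
  qed
  also have "\<dots> = 0" using E by simp
  finally have F: "fps_X * fps_deriv G + fps_const (1/2) * G + fps_X * (V * G) = 0"
    by (simp only: fps_to_fls_eq_0_iff)
  show ?thesis
  proof (rule fps_ext)
    fix n show "G $ n = (0::'a fps) $ n"
    proof (induction n rule: less_induct)
      case (less n)
      have c: "(fps_X * fps_deriv G + fps_const (1/2) * G + fps_X * (V * G)) $ n = 0" using F by simp
      show ?case
      proof (cases n)
        case 0
        then show ?thesis using c by simp
      next
        case (Suc m)
        have "(V * G) $ m = 0" unfolding fps_mult_nth
          using less.IH Suc by (intro sum.neutral) auto
        then have "(of_nat (Suc m) + 1/2) * G $ n = 0" using c Suc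
          by (simp add: algebra_simps)
        moreover have "(of_nat (Suc m) + 1/2 :: 'a) \<noteq> 0"
        proof
          assume "(of_nat (Suc m) + 1/2 :: 'a) = 0"
          then have "(of_nat (2 * Suc m + 1) :: 'a) = of_nat 0" by (simp add: field_simps)
          then show False by (simp only: of_nat_eq_iff)
        qed
        ultimately show ?thesis by simp
      qed
    qed
  qed
qed

theorem mainTheorem8:
  fixes absv :: "'a::field_char_0 \<Rightarrow> real"
    and g :: nat and lam :: "nat \<Rightarrow> 'a"
    and G0 G1 :: "'a option \<Rightarrow> 'a fps"
  assumes "padic_abs absv"
    and "g \<ge> 1"
    and "\<forall>i\<in>{1..2*g+1}. absv (lam i) \<le> 1"
    and "\<forall>i\<in>{1..2*g+1}. \<forall>j\<in>{1..2*g+1}. i \<noteq> j \<longrightarrow> absv (lam i - lam j) = 1"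
    and "in_H absv g lam G0 G1"
    and "\<forall>mu\<in>Lam g lam. G0 mu = 0"
    and "\<forall>l\<le>2*g+1. G1 None $ l = 0"
  shows "\<forall>mu\<in>Lam g lam. G0 mu = 0 \<and> G1 mu = 0"
proof -
  let ?I = "{1..2*g+1}"
  let ?L = "Lam g lam"
  let ?h = "h_rat g lam"
  from assms(1) have abs0: "\<And>x. absv x = 0 \<longleftrightarrow> x = 0" unfolding padic_abs_def by blast
  have inj: "inj_on lam ?I"
  proof (rule inj_onI)
    fix i j assume "i \<in> ?I" "j \<in> ?I" "lam i = lam j"
    then show "i = j" using assms(4) abs0[of 0] by force
  qed
  from assms(5) have eq: "\<forall>mu\<in>?L. dt G1 mu + act ?L ?h G1 mu = 0" unfolding in_H_def by blast
  define c where "c i = G1 (Some (lam i)) $ 0" for i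
  have eqmu: "dt G1 mu + phi mu ?h * fps_to_fls (G1 mu)
      - (\<Sum>i\<in>?I. fls_const (c i / 2) * inverse (t_at mu - fls_const (lam i))) = 0"
    if "mu \<in> ?L" for mu
    using eq that unfolding act_def sumPr[OF inj] c_def by (simp only: add_diff_eq)
  have NoneL: "None \<in> ?L" by (simp add: Lam_def)
  have SomeL: "Some (lam i) \<in> ?L" if "i \<in> ?I" for i using that by (simp add: Lam_def)
  have F: "- (fps_X ^ 2) * fps_deriv (G1 None) + Hinf g lam * G1 None
     - (\<Sum>i\<in>?I. fps_const (c i / 2) * (fps_X * geo (lam i))) = 0"
    using eqmu[OF NoneL] by (intro inf_fps) (simp only: dt_def phi_None t_at_def option.case)
  have mom: "\<forall>n<card ?I. (\<Sum>i\<in>?I. c i * lam i ^ n) = 0"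
    using moments[OF F] assms(7) by simp
  have c0: "c i = 0" if "i \<in> ?I" for i
    using vandermonde[OF _ inj mom that] by simp
  have G1None: "G1 None = 0"
  proof (rule inf_zero[where g=g and lam=lam])
    have "(\<Sum>i\<in>?I. fps_const (c i / 2) * (fps_X * geo (lam i))) = 0"
      using c0 by (intro sum.neutral) simp
    then show "- (fps_X ^ 2) * fps_deriv (G1 None) + Hinf g lam * G1 None = 0" using F by simp
  qed (use assms(7) in simp)
  have G1Some: "G1 (Some (lam j)) = 0" if j: "j \<in> ?I" for j
  proof (rule fin_zero)
    have s: "(\<Sum>i\<in>?I. fls_const (c i / 2) * inverse (t_at (Some (lam j)) - fls_const (lam i))) = 0"
      using c0 by (intro sum.neutral) simp
    show "fps_to_fls (fps_deriv (G1 (Some (lam j)))) + (fls_const (1/2) * fls_X_inv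
        + fps_to_fls (Vf g lam j)) * fps_to_fls (G1 (Some (lam j))) = 0"
      using eqmu[OF SomeL[OF j]] unfolding s phi_Some[OF inj j] by (simp add: dt_def)
  qed
  show ?thesis
  proof
    fix mu assume mu: "mu \<in> ?L"
    then have "G1 mu = 0"
      using G1None G1Some unfolding Lam_def by auto
    then show "G0 mu = 0 \<and> G1 mu = 0" using assms(6) mu by simp
  qed
qed

end
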